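(* Let $\mathcal D=\{d_1,\dots,d_s\}$ and $\mathcal H=\{h_1,\dots,h_n\}$ be finite sets, where each hypothesis $h_i$ is a probability distribution $\mathbb P[\cdot\mid h_i]$ on $\mathcal D$, the hypotheses $h_1,\dots,h_n$ are pairwise distinct as distributions, and the prior $\bm p=(p_1,\dots,p_n)$ on $\mathcal H$ satisfies $p_i>0$ for all $i$. Consider chained iterated learning with initial hypothesis $\bm h_{\mathrm{init}}=h_1$ and sample sizes $m_1,m_2,\dots$. Let ${\tt d}_1=\min_{j\neq 1} d_{RS}(\mathbb P[\cdot\mid h_1],\mathbb P[\cdot\mid h_j])$. Then for any $0<\varepsilon<1$, the sample size sequence $$m_t=\frac{4}{{\tt d}_1^2}\ln\frac{nt}{\varepsilon\,p_1}=\frac{4}{{\tt d}_1^2}\Bigl(\ln\frac{t}{\varepsilon}+C\Bigr),\qquad C=\ln\frac{n}{p_1},$$ makes iterated learning $\varepsilon$-self-sustaining; that is, for every $t\ge 1$, the posterior $\bm h^t$ of learner $t$ satisfies $\bm h^t_1\ge 1-\varepsilon$.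
   Context: Root-sine distance: for probability vectors $\bm a,\bm b$ on $\mathcal D$, $d_{RS}(\bm a,\bm b)=\sqrt{1-\bigl(\sum_{i=1}^s\sqrt{a_ib_i}\bigr)^2}$. Chained iterated learning: for $\mathbf d=(x_1,\dots,x_m)\in\mathcal D^m$ let $\mathbb P[\mathbf d\mid h]=\prod_{k=1}^m\mathbb P[x_k\mid h]$ and Bayesian posterior $\mathbb P[h_j\mid\mathbf d]=\mathbb P[\mathbf d\mid h_j]p_j/\sum_{k=1}^n\mathbb P[\mathbf d\mid h_k]p_k$. Learner $t\ge1$ picks a hypothesis $h_i$ from the posterior of learner $t-1$ (for $t=1$, from $\bm h_{\mathrm{init}}$), draws $m_t$ i.i.d. samples $\mathbf d\in\mathcal D^{m_t}$ from $h_i$, and forms the posterior $\mathbb P[\cdot\mid\mathbf d]$. The transition probabilities are $P^{|t}_{ij}=\sum_{\mathbf d\in\mathcal D^{m_t}}\mathbb P[h_j\mid\mathbf d]\,\mathbb P[\mathbf d\mid h_i]$, and the (marginal) posterior of learner $t$ is the row vector $\bm h^t=\bm h^{t-1}P^{|t}$ with $\bm h^0=(1,0,\dots,0)$ (the point mass at $h_1$). Iterated learning is $\varepsilon$-self-sustaining if for every learner $t$, a random hypothesis drawn from $\bm h^t$ equals $\bm h_{\mathrm{init}}$ with probability at least $1-\varepsilon$. *)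

theory Defs
  imports Complex_Main
begin

text \<open>Data domain D = {0..<s}; hypotheses h_1..h_n are indexed 0..<n; hypothesis i is
  the distribution q i on D. Index 0 plays the role of h_1 (= h_init).\<close>

definition dRS :: "nat \<Rightarrow> (nat \<Rightarrow> real) \<Rightarrow> (nat \<Rightarrow> real) \<Rightarrow> real" where
  "dRS s a b = sqrt (1 - (\<Sum>i<s. sqrt (a i * b i))\<^sup>2)"

definition data_seqs :: "nat \<Rightarrow> nat \<Rightarrow> nat list set" where
  "data_seqs s m = {xs. length xs = m \<and> set xs \<subseteq> {..<s}}"

definition lik :: "(nat \<Rightarrow> nat \<Rightarrow> real) \<Rightarrow> nat \<Rightarrow> nat list \<Rightarrow> real" where
  "lik q i xs = prod_list (map (q i) xs)"

definition posterior :: "nat \<Rightarrow> (nat \<Rightarrow> nat \<Rightarrow> real) \<Rightarrow> (nat \<Rightarrow> real) \<Rightarrow> nat \<Rightarrow> nat list \<Rightarrow> real" where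
  "posterior n q p j xs = lik q j xs * p j / (\<Sum>k<n. lik q k xs * p k)"

definition trans_prob :: "nat \<Rightarrow> nat \<Rightarrow> (nat \<Rightarrow> nat \<Rightarrow> real) \<Rightarrow> (nat \<Rightarrow> real) \<Rightarrow> nat \<Rightarrow> nat \<Rightarrow> nat \<Rightarrow> real" where
  "trans_prob s n q p m i j = (\<Sum>xs\<in>data_seqs s m. posterior n q p j xs * lik q i xs)"

text \<open>Marginal posterior h^t of learner t; m t is the sample size of learner t (t \<ge> 1).\<close>
primrec hpost :: "nat \<Rightarrow> nat \<Rightarrow> (nat \<Rightarrow> nat \<Rightarrow> real) \<Rightarrow> (nat \<Rightarrow> real) \<Rightarrow> (nat \<Rightarrow> nat) \<Rightarrow> nat \<Rightarrow> nat \<Rightarrow> real" where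
  "hpost s n q p m 0 = (\<lambda>j. if j = 0 then 1 else 0)"
| "hpost s n q p m (Suc t) =
     (\<lambda>j. \<Sum>i<n. hpost s n q p m t i * trans_prob s n q p (m (Suc t)) i j)"

end

theory Submission imports Defs begin

lemma data_seqs_Suc:
  "data_seqs s (Suc m) = (\<lambda>(x,xs). x#xs) ` ({..<s} \<times> data_seqs s m)"
  unfolding data_seqs_def
  by (auto simp: length_Suc_conv image_iff)

lemma finite_data_seqs: "finite (data_seqs s m)"
  unfolding data_seqs_def using finite_lists_length_eq[of "{..<s}" m] by (simp add: conj_commute)

lemma sum_data_seqs:
  "(\<Sum>xs\<in>data_seqs s m. prod_list (map f xs)) = (\<Sum>x<s. (f x :: real))^m"
proof (induction m)
  case 0
  have "data_seqs s 0 = {[]}" unfolding data_seqs_def by auto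
  then show ?case by simp
next
  case (Suc m)
  have inj: "inj_on (\<lambda>(x,xs). x#xs) ({..<s} \<times> data_seqs s m)"
    by (auto simp: inj_on_def)
  have "(\<Sum>xs\<in>data_seqs s (Suc m). prod_list (map f xs))
      = (\<Sum>(x,xs)\<in>{..<s} \<times> data_seqs s m. f x * prod_list (map f xs))"
    unfolding data_seqs_Suc by (subst sum.reindex[OF inj]) (simp add: case_prod_beta)
  also have "\<dots> = (\<Sum>x<s. f x) * (\<Sum>xs\<in>data_seqs s m. prod_list (map f xs))"
    by (simp add: sum_product sum.cartesian_product)
  finally show ?case using Suc by simp
qed

lemma sqrt_prod_list:
  "sqrt (prod_list (map f xs) * prod_list (map g xs)) = prod_list (map (\<lambda>x. sqrt (f x * g x)) xs)"
  by (induction xs) (auto simp: real_sqrt_mult algebra_simps)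

lemma term_ineq:
  fixes a b P Q D :: real
  assumes "a > 0" "b \<ge> 0" "P > 0" "Q > 0" "D \<ge> a*P + b*Q"
  shows "b*Q*a/D \<le> sqrt (Q/P) * sqrt (a*b)"
proof -
  define u where "u = sqrt (a*P)"
  define v where "v = sqrt (b*Q)"
  have u: "u > 0" "u^2 = a*P" using assms by (auto simp: u_def)
  have v: "v \<ge> 0" "v^2 = b*Q" using assms by (auto simp: v_def)
  have r: "sqrt (Q/P) * sqrt (a*b) = u*v/P"
  proof -
    have e: "a*P*(b*Q) = P^2 * (Q/P*(a*b))" using assms by (simp add: field_simps power2_eq_square)
    have "u*v = sqrt(a*P*(b*Q))" by (simp add: u_def v_def real_sqrt_mult)
    also have "\<dots> = P * sqrt (Q/P*(a*b))" unfolding e real_sqrt_mult using assms by simp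
    finally have "u*v = P * sqrt (Q/P*(a*b))" .
    moreover have "sqrt (Q/P*(a*b)) = sqrt (Q/P) * sqrt (a*b)" by (rule real_sqrt_mult)
    ultimately show ?thesis using assms by simp
  qed
  have D: "D \<ge> u^2 + v^2" "u^2+v^2 > 0" using u v assms by (auto intro: add_pos_nonneg)
  have "b*Q*a/D \<le> b*Q*a/(u^2+v^2)"
    using D assms by (intro divide_left_mono) auto
  also have "\<dots> = v^2*u^2/(u^2+v^2)/P"
  proof -
    have "v^2*u^2/(u^2+v^2)/P = (b*Q*a*P)/(u^2+v^2)/P" using u v by (simp add: mult.assoc)
    also have "\<dots> = b*Q*a/(u^2+v^2)" using assms by simp
    finally show ?thesis by simp
  qed
  also have "\<dots> \<le> u*v/P"
  proof -
    have "uv": "u*v \<ge> 0" using u v by simp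
    have e1: "u^2+v^2 - u*v = (u-v)^2 + u*v" by (simp add: power2_eq_square algebra_simps)
    have g: "u^2+v^2 - u*v \<ge> 0" unfolding e1 using uv by simp
    have e2: "u*v*(u^2+v^2) - v^2*u^2 = u*v*(u^2+v^2 - u*v)" by (simp add: power2_eq_square algebra_simps)
    have "u*v*(u^2+v^2 - u*v) \<ge> 0" using uv g by simp
    then have "v^2*u^2 \<le> u*v*(u^2+v^2)" using e2 by linarith
    then have "v^2*u^2/(u^2+v^2) \<le> u*v" using D by (simp add: divide_le_eq)
    then show ?thesis using assms by (intro divide_right_mono) auto
  qed
  finally show ?thesis using r by simp
qed


lemma key_ineq:
  fixes L p :: "nat \<Rightarrow> real"
  assumes n: "n \<ge> 1" and L: "\<And>k. k<n \<Longrightarrow> L k \<ge> 0" and p: "\<And>k. k<n \<Longrightarrow> p k > 0"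
  shows "(1 - L 0 * p 0 / (\<Sum>k<n. L k * p k)) * L 0
          \<le> (\<Sum>j\<in>{1..<n}. sqrt (p j / p 0) * sqrt (L 0 * L j))"
proof (cases "L 0 = 0")
  case True
  then show ?thesis by (simp add: sum_nonneg)
next
  case False
  with L[of 0] n have L0: "L 0 > 0" by auto
  have p0: "p 0 > 0" using p n by auto
  define S where "S = (\<Sum>j\<in>{1..<n}. L j * p j)"
  have split: "(\<Sum>k<n. L k * p k) = L 0 * p 0 + S"
    unfolding S_def lessThan_atLeast0 using n by (subst sum.atLeast_Suc_lessThan) auto
  have p': "\<And>k. k<n \<Longrightarrow> 0 \<le> p k" using p less_imp_le by blast
  have Snn: "S \<ge> 0" unfolding S_def using L p' by (auto intro!: sum_nonneg)
  define D where "D = L 0 * p 0 + S"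
  have Dpos: "D > 0" unfolding D_def using L0 p0 Snn by (simp add: add_pos_nonneg)
  have "(1 - L 0 * p 0 / (\<Sum>k<n. L k * p k)) * L 0 = S / D * L 0"
  proof -
    have "1 - L 0 * p 0 / D = (D - L 0 * p 0) / D" using Dpos by (simp add: diff_divide_distrib)
    also have "D - L 0 * p 0 = S" by (simp add: D_def)
    finally show ?thesis unfolding split D_def[symmetric] by simp
  qed
  also have "\<dots> = (\<Sum>j\<in>{1..<n}. L j * p j * L 0 / D)"
    unfolding S_def by (simp add: sum_divide_distrib sum_distrib_right)
  also have "\<dots> \<le> (\<Sum>j\<in>{1..<n}. sqrt (p j / p 0) * sqrt (L 0 * L j))"
  proof (rule sum_mono)
    fix j assume j: "j \<in> {1..<n}"
    have "L j * p j \<le> S" unfolding S_def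
      using j L p' by (intro member_le_sum) auto
    then have "D \<ge> L 0 * p 0 + L j * p j" unfolding D_def by simp
    then show "L j * p j * L 0 / D \<le> sqrt (p j / p 0) * sqrt (L 0 * L j)"
      using term_ineq[of "L 0" "L j" "p 0" "p j" D] L0 L[of j] p[of j] p0 j by auto
  qed
  finally show ?thesis .
qed

lemma lik_nonneg:
  assumes "\<And>x. x < s \<Longrightarrow> q i x \<ge> 0" "xs \<in> data_seqs s m"
  shows "lik q i xs \<ge> 0"
  using assms unfolding lik_def data_seqs_def by (auto intro!: prod_list_nonneg simp: subset_iff)

lemma P11_bound:
  assumes q_nonneg: "\<And>i x. i < n \<Longrightarrow> x < s \<Longrightarrow> q i x \<ge> 0"
    and q_sum: "\<And>i. i < n \<Longrightarrow> (\<Sum>x<s. q i x) = 1"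
    and p_pos: "\<And>i. i < n \<Longrightarrow> p i > 0" and n: "n \<ge> 1"
  shows "1 - trans_prob s n q p m 0 0
     \<le> (\<Sum>j\<in>{1..<n}. sqrt (p j / p 0) * (\<Sum>x<s. sqrt (q 0 x * q j x))^m)"
proof -
  let ?D = "data_seqs s m"
  have one: "(\<Sum>xs\<in>?D. lik q 0 xs) = 1"
    unfolding lik_def sum_data_seqs using q_sum[of 0] n by simp
  have "1 - trans_prob s n q p m 0 0 = (\<Sum>xs\<in>?D. (1 - posterior n q p 0 xs) * lik q 0 xs)"
    unfolding trans_prob_def using one by (simp add: sum_subtractf algebra_simps)
  also have "\<dots> \<le> (\<Sum>xs\<in>?D. \<Sum>j\<in>{1..<n}. sqrt (p j / p 0) * sqrt (lik q 0 xs * lik q j xs))"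
  proof (rule sum_mono)
    fix xs assume xs: "xs \<in> ?D"
    show "(1 - posterior n q p 0 xs) * lik q 0 xs
        \<le> (\<Sum>j\<in>{1..<n}. sqrt (p j / p 0) * sqrt (lik q 0 xs * lik q j xs))"
      unfolding posterior_def
      by (rule key_ineq[OF n]) (use lik_nonneg[OF _ xs] q_nonneg p_pos in auto)
  qed
  also have "\<dots> = (\<Sum>j\<in>{1..<n}. sqrt (p j / p 0) * (\<Sum>xs\<in>?D. sqrt (lik q 0 xs * lik q j xs)))"
    by (subst sum.swap) (simp add: sum_distrib_left)
  also have "\<dots> = (\<Sum>j\<in>{1..<n}. sqrt (p j / p 0) * (\<Sum>x<s. sqrt (q 0 x * q j x))^m)"
    unfolding lik_def sqrt_prod_list sum_data_seqs by simp
  finally show ?thesis .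
qed

lemma BC_lt1:
  fixes a b :: "nat \<Rightarrow> real"
  assumes "\<And>x. x < s \<Longrightarrow> a x \<ge> 0" "\<And>x. x < s \<Longrightarrow> b x \<ge> 0"
    "(\<Sum>x<s. a x) = 1" "(\<Sum>x<s. b x) = 1" "x0 < s" "a x0 \<noteq> b x0"
  shows "(\<Sum>x<s. sqrt (a x * b x)) < 1"
proof -
  have e: "(sqrt (a x) - sqrt (b x))^2 = a x + b x - 2 * sqrt (a x * b x)" if "x < s" for x
    using assms(1,2)[OF that] by (simp add: power2_diff real_sqrt_mult)
  have "(\<Sum>x<s. (sqrt (a x) - sqrt (b x))^2) = (\<Sum>x<s. a x + b x - 2 * sqrt (a x * b x))"
    by (rule sum.cong) (auto simp: e)
  also have "\<dots> = 2 - 2 * (\<Sum>x<s. sqrt (a x * b x))"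
    using assms(3,4) by (simp add: sum.distrib sum_subtractf sum_distrib_left)
  finally have eq: "(\<Sum>x<s. (sqrt (a x) - sqrt (b x))^2) = 2 - 2 * (\<Sum>x<s. sqrt (a x * b x))" .
  have "sqrt (a x0) \<noteq> sqrt (b x0)" using assms(6) assms(1,2)[OF assms(5)] by simp
  then have "(sqrt (a x0) - sqrt (b x0))^2 > 0" by simp
  then have "(\<Sum>x<s. (sqrt (a x) - sqrt (b x))^2) > 0"
    using assms(5) by (intro sum_pos2[where i=x0]) auto
  then show ?thesis using eq by simp
qed

lemma trans_nonneg:
  assumes q_nonneg: "\<And>i x. i < n \<Longrightarrow> x < s \<Longrightarrow> q i x \<ge> 0"
    and p_pos: "\<And>i. i < n \<Longrightarrow> p i > 0" and "i < n" "j < n"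
  shows "trans_prob s n q p m i j \<ge> 0"
  unfolding trans_prob_def posterior_def
proof (rule sum_nonneg)
  fix xs assume xs: "xs \<in> data_seqs s m"
  have p': "\<And>k. k<n \<Longrightarrow> 0 \<le> p k" using p_pos less_imp_le by blast
  have l: "\<And>k. k<n \<Longrightarrow> 0 \<le> lik q k xs" using lik_nonneg[OF _ xs] q_nonneg by blast
  have d: "0 \<le> (\<Sum>k<n. lik q k xs * p k)" using l p' by (auto intro!: sum_nonneg)
  show "0 \<le> lik q j xs * p j / (\<Sum>k<n. lik q k xs * p k) * lik q i xs"
    using l p' d assms by simp
qed

lemma hpost_nonneg:
  assumes q_nonneg: "\<And>i x. i < n \<Longrightarrow> x < s \<Longrightarrow> q i x \<ge> 0"
    and p_pos: "\<And>i. i < n \<Longrightarrow> p i > 0"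
  shows "\<forall>j<n. hpost s n q p m t j \<ge> 0"
proof (induction t)
  case 0 then show ?case by simp
next
  case (Suc t) then show ?case
    using trans_nonneg[OF q_nonneg p_pos] by (auto intro!: sum_nonneg mult_nonneg_nonneg)
qed

lemma hpost_step:
  assumes q_nonneg: "\<And>i x. i < n \<Longrightarrow> x < s \<Longrightarrow> q i x \<ge> 0"
    and p_pos: "\<And>i. i < n \<Longrightarrow> p i > 0" and n: "n \<ge> 1"
  shows "hpost s n q p m (Suc t) 0 \<ge> hpost s n q p m t 0 * trans_prob s n q p (m (Suc t)) 0 0"
  using n hpost_nonneg[OF q_nonneg p_pos] trans_nonneg[OF q_nonneg p_pos]
  by (auto intro!: member_le_sum[where i=0, where f="\<lambda>i. hpost s n q p m t i * trans_prob s n q p (m (Suc t)) i 0"] mult_nonneg_nonneg)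

lemma inv_sq_sum: "t \<ge> 1 \<Longrightarrow> (\<Sum>k\<in>{1..t}. 1 / (real k)^2) \<le> 2 - 1 / real t"
proof (induction t rule: dec_induct)
  case base then show ?case by simp
next
  case (step t)
  have "(\<Sum>k\<in>{1..Suc t}. 1 / (real k)^2) = (\<Sum>k\<in>{1..t}. 1 / (real k)^2) + 1 / (real t + 1)^2"
    by simp
  also have "\<dots> \<le> 2 - 1 / real t + 1 / (real t + 1)^2" using step by simp
  also have "\<dots> \<le> 2 - 1 / (real t + 1)"
  proof -
    have t: "real t \<ge> 1" using step by simp
    define x where "x = real t"
    have x: "x \<ge> 1" using t x_def by simp
    have a: "1 / (x + 1)^2 + 1 / (x + 1) = (x+2)/(x+1)^2"
    proof -
      define y where "y = x + 1"
      have y: "y \<noteq> 0" using x y_def by simp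
      have "1 / y^2 + 1 / y = (y+1)/y^2" using y by (simp add: power2_eq_square field_simps)
      then show ?thesis unfolding y_def by (simp add: add.commute add.left_commute)
    qed
    have b: "x*(x+2) \<le> (x+1)^2" by (simp add: power2_eq_square algebra_simps)
    have c: "(x+2)/(x+1)^2 \<le> 1/x" using x b
      by (simp add: le_divide_eq divide_le_eq mult.commute)
    have "1 / (real t + 1)^2 + 1 / (real t + 1) \<le> 1 / real t"
      using a c x_def by simp
    then show ?thesis by simp
  qed
  finally show ?case by (simp add: add.commute)
qed


lemma term_bound:
  fixes BC d1 \<epsilon> p0 pj :: real and M n k :: nat
  assumes BC: "0 \<le> BC" "BC^2 \<le> 1 - d1^2" and d1: "d1 > 0"
    and M: "real M \<ge> 4/d1^2 * ln (real n * real k / (\<epsilon>*p0))"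
    and n: "n \<ge> 1" and k: "k \<ge> 1" and e: "\<epsilon> > 0" and p0: "p0 > 0" "p0 \<le> 1"
    and pj: "pj > 0" "pj \<le> 1"
  shows "sqrt (pj/p0) * BC^M \<le> \<epsilon>^2/((real n)^2*(real k)^2)"
proof -
  define L where "L = real n * real k / (\<epsilon>*p0)"
  have L: "L > 0" unfolding L_def using n k e p0 by simp
  have "d1^2 * real M \<ge> d1^2 * (4/d1^2 * ln L)"
    using M d1 unfolding L_def by (intro mult_left_mono) auto
  then have dM: "d1^2 * real M \<ge> 4 * ln L" using d1 by simp
  have "BC^2 \<le> exp (-(d1^2))" using BC(2) exp_ge_add_one_self[of "-(d1^2)"] by linarith
  then have "(BC^2)^M \<le> exp (-(d1^2))^M" using BC(1) by (intro power_mono) auto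
  also have "\<dots> = exp (real M * (-(d1^2)))" by (rule exp_of_nat_mult[symmetric])
  also have "\<dots> \<le> exp (-(4 * ln L))" using dM by (simp add: mult.commute)
  also have "\<dots> = (1/L^2)^2"
  proof -
    have "exp (4 * ln L) = exp (ln L) ^ 4" using exp_of_nat_mult[of 4 "ln L"] by simp
    then have "exp (4 * ln L) = L^4" using L by simp
    then show ?thesis by (simp add: exp_minus power_divide inverse_eq_divide flip: power_mult)
  qed
  finally have "(BC^M)^2 \<le> (1/L^2)^2" by (simp flip: power_mult add: mult.commute)
  then have bm: "BC^M \<le> 1/L^2" by (rule power2_le_imp_le) simp
  have "pj/p0 \<le> (1/p0)^2"
  proof -
    have "pj/p0 \<le> 1/p0" using pj p0 by (simp add: divide_right_mono)
    also have "\<dots> \<le> 1/p0 * (1/p0)" using p0 by (simp add: le_divide_eq)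
    finally show ?thesis by (simp add: power2_eq_square)
  qed
  then have sp: "sqrt (pj/p0) \<le> 1/p0" using p0
    by (metis real_sqrt_abs real_sqrt_le_mono abs_of_pos divide_pos_pos zero_less_one)
  have "sqrt (pj/p0) * BC^M \<le> 1/p0 * (1/L^2)"
    using sp bm BC(1) p0 by (intro mult_mono) auto
  also have "\<dots> = \<epsilon>^2 * p0/((real n)^2*(real k)^2)"
    unfolding L_def using p0 e n k by (simp add: field_simps power2_eq_square)
  also have "\<dots> \<le> \<epsilon>^2/((real n)^2*(real k)^2)"
    using p0 by (simp add: divide_right_mono mult_left_le)
  finally show ?thesis .
qed

theorem theorem1:
  fixes s n :: nat and q :: "nat \<Rightarrow> nat \<Rightarrow> real" and p :: "nat \<Rightarrow> real"
    and \<epsilon> d1 :: real and m :: "nat \<Rightarrow> nat"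
  assumes q_nonneg: "\<And>i x. i < n \<Longrightarrow> x < s \<Longrightarrow> q i x \<ge> 0"
    and q_sum: "\<And>i. i < n \<Longrightarrow> (\<Sum>x<s. q i x) = 1"
    and q_distinct: "\<And>i j. i < n \<Longrightarrow> j < n \<Longrightarrow> i \<noteq> j \<Longrightarrow> (\<exists>x<s. q i x \<noteq> q j x)"
    and p_pos: "\<And>i. i < n \<Longrightarrow> p i > 0"
    and p_sum: "(\<Sum>i<n. p i) = 1"
    and d1_def: "d1 = Min {dRS s (q 0) (q j) | j. 0 < j \<and> j < n}"
    and eps: "0 < \<epsilon>" "\<epsilon> < 1"
    and m_def: "\<And>t. t \<ge> 1 \<Longrightarrow>
        m t = nat \<lceil>4 / d1\<^sup>2 * ln (real n * real t / (\<epsilon> * p 0))\<rceil>"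
  shows "\<forall>t\<ge>1. hpost s n q p m t 0 \<ge> 1 - \<epsilon>"
proof -
  have n1: "n \<ge> 1" using p_sum by (cases n) auto
  have p0: "p 0 > 0" using p_pos n1 by auto
  have p'': "\<And>k. k<n \<Longrightarrow> 0 \<le> p k" using p_pos less_imp_le by blast
  have p_le1: "p j \<le> 1" if "j < n" for j
  proof -
    have "p j \<le> (\<Sum>i<n. p i)" using that p'' by (intro member_le_sum) auto
    then show ?thesis using p_sum by simp
  qed
  define BC where "BC j = (\<Sum>x<s. sqrt (q 0 x * q j x))" for j
  define c where "c k = (real n - 1) * \<epsilon>^2 / ((real n)^2 * (real k)^2)" for k :: nat
  have BC_nn: "BC j \<ge> 0" if "j < n" for j
    unfolding BC_def using q_nonneg that n1 by (auto intro!: sum_nonneg)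
  have BC_lt: "BC j < 1" if jj: "0 < j" "j < n" for j
  proof -
    obtain x0 where "x0 < s" "q 0 x0 \<noteq> q j x0" using q_distinct[of 0 j] jj by auto
    note x0 = this
    have a: "\<And>x. x < s \<Longrightarrow> q 0 x \<ge> 0" "\<And>x. x < s \<Longrightarrow> q j x \<ge> 0"
      using q_nonneg jj by auto
    have b: "(\<Sum>x<s. q 0 x) = 1" "(\<Sum>x<s. q j x) = 1" using q_sum jj by auto
    show ?thesis unfolding BC_def by (rule BC_lt1[OF a b x0])
  qed
  have dRS_eq: "dRS s (q 0) (q j) = sqrt (1 - (BC j)^2)" for j
    by (simp add: dRS_def BC_def)
  have DS: "{dRS s (q 0) (q j) | j. 0 < j \<and> j < n} = (\<lambda>j. dRS s (q 0) (q j)) ` {1..<n}"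
    by auto
  have per: "sqrt (p j / p 0) * BC j ^ m k \<le> \<epsilon>^2/((real n)^2*(real k)^2)"
    if j: "0 < j" "j < n" and k: "k \<ge> 1" for j k
  proof -
    have bc: "0 \<le> BC j" "BC j < 1" using BC_nn BC_lt j by auto
    have sq: "(BC j)^2 < 1" using power_strict_mono[of "BC j" 1 2] bc by simp
    have fin: "finite ((\<lambda>j. dRS s (q 0) (q j)) ` {1..<n})" by simp
    have ne: "(\<lambda>j. dRS s (q 0) (q j)) ` {1..<n} \<noteq> {}" using j by auto
    have "\<forall>a\<in>(\<lambda>j. dRS s (q 0) (q j)) ` {1..<n}. 0 < a"
    proof
      fix a assume "a \<in> (\<lambda>j. dRS s (q 0) (q j)) ` {1..<n}"
      then obtain i where i: "i \<in> {1..<n}" "a = dRS s (q 0) (q i)" by auto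
      have "BC i \<ge> 0" "BC i < 1" using BC_nn BC_lt i by auto
      then have "(BC i)^2 < 1" using power_strict_mono[of "BC i" 1 2] by simp
      then show "0 < a" using i dRS_eq by simp
    qed
    then have d1pos: "d1 > 0" unfolding d1_def DS using fin ne by simp
    have d1le: "d1 \<le> dRS s (q 0) (q j)" unfolding d1_def DS using fin j by (intro Min_le) auto
    have "d1^2 \<le> (dRS s (q 0) (q j))^2" using d1le d1pos by (intro power_mono) auto
    also have "\<dots> = 1 - (BC j)^2" using dRS_eq sq by simp
    finally have "(BC j)^2 \<le> 1 - d1^2" by simp
    note b2 = this
    have mk: "real (m k) \<ge> 4/d1^2 * ln (real n * real k / (\<epsilon>*p 0))"
      unfolding m_def[OF k] by (rule real_nat_ceiling_ge)
    have p01: "p 0 \<le> 1" using p_le1 n1 by simp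
    have pj: "p j > 0" "p j \<le> 1" using p_pos p_le1 j by auto
    show ?thesis by (rule term_bound[OF bc(1) b2 d1pos mk n1 k eps(1) p0 p01 pj])
  qed
  have A: "1 - trans_prob s n q p (m k) 0 0 \<le> c k" if k: "k \<ge> 1" for k
  proof -
    have "1 - trans_prob s n q p (m k) 0 0 \<le> (\<Sum>j\<in>{1..<n}. sqrt (p j / p 0) * BC j ^ m k)"
      unfolding BC_def by (rule P11_bound[OF q_nonneg q_sum p_pos n1])
    also have "\<dots> \<le> (\<Sum>j\<in>{1..<n}. \<epsilon>^2/((real n)^2*(real k)^2))"
      using per k by (intro sum_mono) auto
    also have "\<dots> = c k" unfolding c_def using n1 by (simp add: of_nat_diff)
    finally show ?thesis .
  qed
  have c_nn: "c k \<ge> 0" for k unfolding c_def using n1 by simp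
  have c_le: "c k \<le> \<epsilon>^2" if "k \<ge> 1" for k
  proof -
    have "real n - 1 \<le> (real n)^2 * (real k)^2"
    proof -
      have "real n \<le> (real n)^2" using n1 by (simp add: power2_eq_square)
      also have "\<dots> \<le> (real n)^2 * (real k)^2"
      proof -
        have "(real k)^2 \<ge> 1" using that by (simp add: one_le_power)
        then show ?thesis using mult_left_mono[of 1 "(real k)^2" "(real n)^2"] by simp
      qed
      finally show ?thesis by simp
    qed
    moreover have "(real n)^2 * (real k)^2 > 0" using n1 that by simp
    ultimately have "(real n - 1) / ((real n)^2 * (real k)^2) \<le> 1" by simp
    then have "\<epsilon>^2 * ((real n - 1) / ((real n)^2 * (real k)^2)) \<le> \<epsilon>^2 * 1"
      by (intro mult_left_mono) auto
    then show ?thesis unfolding c_def by (simp add: mult.commute)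
  qed
  have e2: "\<epsilon>^2 \<le> 1" using eps by (simp add: power_le_one)
  have B: "hpost s n q p m t 0 \<ge> 1 - (\<Sum>k\<in>{1..t}. c k)" for t
  proof (induction t)
    case 0 then show ?case by simp
  next
    case (Suc t)
    let ?h = "hpost s n q p m t 0" and ?P = "trans_prob s n q p (m (Suc t)) 0 0"
    let ?S = "\<Sum>k\<in>{1..t}. c k"
    have h0: "?h \<ge> 0" using hpost_nonneg[OF q_nonneg p_pos] n1 by auto
    have P: "?P \<ge> 1 - c (Suc t)" using A[of "Suc t"] by simp
    have c1: "1 - c (Suc t) \<ge> 0" using c_le[of "Suc t"] e2 by simp
    have S0: "?S \<ge> 0" using c_nn by (simp add: sum_nonneg)
    have "hpost s n q p m (Suc t) 0 \<ge> ?h * ?P" by (rule hpost_step[OF q_nonneg p_pos n1])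
    moreover have "?h * ?P \<ge> ?h * (1 - c (Suc t))" using h0 P by (intro mult_left_mono) auto
    moreover have "?h * (1 - c (Suc t)) \<ge> (1 - ?S) * (1 - c (Suc t))"
      using Suc c1 by (intro mult_right_mono) auto
    moreover have "(1 - ?S) * (1 - c (Suc t)) \<ge> 1 - ?S - c (Suc t)"
    proof -
      have "(1 - ?S) * (1 - c (Suc t)) = 1 - ?S - c (Suc t) + ?S * c (Suc t)"
        by (simp add: algebra_simps)
      moreover have "?S * c (Suc t) \<ge> 0" using S0 c_nn[of "Suc t"] by simp
      ultimately show ?thesis by linarith
    qed
    moreover have "1 - ?S - c (Suc t) = 1 - (\<Sum>k\<in>{1..Suc t}. c k)" by simp
    ultimately show ?case by linarith
  qed
  show ?thesis
  proof (intro allI impI)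
    fix t :: nat assume t: "t \<ge> 1"
    have "(\<Sum>k\<in>{1..t}. c k) = (real n - 1) * \<epsilon>^2 / (real n)^2 * (\<Sum>k\<in>{1..t}. 1 / (real k)^2)"
      unfolding c_def by (simp add: sum_distrib_left)
    also have "\<dots> \<le> (real n - 1) * \<epsilon>^2 / (real n)^2 * 2"
    proof (rule mult_left_mono)
      show "(\<Sum>k\<in>{1..t}. 1 / (real k)^2) \<le> 2" 
      proof -
        have "1 / real t \<ge> 0" by simp
        then show ?thesis using inv_sq_sum[OF t] by linarith
      qed
      show "0 \<le> (real n - 1) * \<epsilon>^2 / (real n)^2" using n1 by simp
    qed
    also have "\<dots> \<le> \<epsilon>^2"
    proof -
      have "2 * (real n - 1) \<le> (real n)^2"
        using sum_squares_ge_zero[of "real n - 1" 0] by (simp add: power2_eq_square algebra_simps)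
      then have "(real n - 1) * 2 / (real n)^2 \<le> 1" using n1 by simp
      then have "\<epsilon>^2 * ((real n - 1) * 2 / (real n)^2) \<le> \<epsilon>^2 * 1" by (intro mult_left_mono) auto
      then show ?thesis by (simp add: algebra_simps)
    qed
    also have "\<dots> \<le> \<epsilon>" using eps by (simp add: power2_eq_square mult_left_le)
    finally show "hpost s n q p m t 0 \<ge> 1 - \<epsilon>" using B[of t] by simp
  qed
qed

end
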